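(* The law $\mathrm{y}\diamond(\mathrm{x}\diamond(\mathrm{y}\diamond(\mathrm{y}\diamond\mathrm{y})))\simeq\mathrm{x}$ does not imply the law $\mathrm{x}\simeq(\mathrm{x}\diamond\mathrm{x})\diamond(\mathrm{x}\diamond(\mathrm{x}\diamond\mathrm{x}))$.
   Context: A magma is a set with a binary operation $\diamond$; it satisfies a law if the identity holds for all assignments of variables. A law implies another if every magma satisfying the first satisfies the second. *)

theory Defs
  imports Main
begin

definition law_A :: "'a set \<Rightarrow> ('a \<Rightarrow> 'a \<Rightarrow> 'a) \<Rightarrow> bool" where
  "law_A M f \<longleftrightarrow> (\<forall>x\<in>M. \<forall>y\<in>M. f y (f x (f y (f y y))) = x)"

definition law_B :: "'a set \<Rightarrow> ('a \<Rightarrow> 'a \<Rightarrow> 'a) \<Rightarrow> bool" where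
  "law_B M f \<longleftrightarrow> (\<forall>x\<in>M. x = f (f x x) (f x (f x x)))"

definition magma_on :: "'a set \<Rightarrow> ('a \<Rightarrow> 'a \<Rightarrow> 'a) \<Rightarrow> bool" where
  "magma_on M f \<longleftrightarrow> M \<noteq> {} \<and> (\<forall>x\<in>M. \<forall>y\<in>M. f x y \<in> M)"

end

theory Submission
  imports Defs "HOL-Library.Countable"
begin

datatype tr = Lf | Nd tr tr

instance tr :: countable by countable_datatype

definition op :: "tr \<Rightarrow> tr \<Rightarrow> tr" where
  "op s t = (case t of Nd x (Nd a (Nd b c)) \<Rightarrow> (if a = s \<and> b = s \<and> c = s then x else Nd s t) | _ \<Rightarrow> Nd s t)"

lemma sz1: "Nd y z \<noteq> y" "Nd z y \<noteq> y"
  by (induction y arbitrary: z) auto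

lemma sq: "op y y = Nd y y"
  unfolding op_def by (auto split: tr.split simp: sz1)

lemma sq2: "op y (Nd y y) = Nd y (Nd y y)"
proof -
  have "Nd y y \<noteq> Nd b c" if "y = Nd b c" "c = y" for b c using that sz1 by metis
  then show ?thesis unfolding op_def by (auto split: tr.split simp: sz1)
qed

lemma sq3: "op x (Nd y (Nd y y)) = Nd x (Nd y (Nd y y))"
  unfolding op_def by (auto split: tr.split simp: sz1)

lemma lawA: "op y (op x (op y (op y y))) = x"
  unfolding sq sq2 sq3 by (simp add: op_def)

lemma notB: "op (op Lf Lf) (op Lf (op Lf Lf)) \<noteq> Lf"
  by (simp add: op_def)

theorem mainTheorem9:
  shows "\<exists>(M :: nat set) (f :: nat \<Rightarrow> nat \<Rightarrow> nat).
           magma_on M f \<and> law_A M f \<and> \<not> law_B M f"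
proof (intro exI conjI)
  let ?f = "\<lambda>m n. to_nat (op (from_nat m) (from_nat n :: tr))"
  show "magma_on (range (to_nat :: tr \<Rightarrow> nat)) ?f"
    unfolding magma_on_def by auto
  show "law_A (range (to_nat :: tr \<Rightarrow> nat)) ?f"
    unfolding law_A_def by (auto simp: lawA)
  show "\<not> law_B (range (to_nat :: tr \<Rightarrow> nat)) ?f"
    unfolding law_B_def using notB
    by (metis from_nat_to_nat rangeI)
qed

end
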